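(* Every $d$-dimensional perfect lattice $\Lambda$ has a $\mathbb Z$-basis $f_1,\dots,f_d$ such that every minimal vector $v=\sum_{i=1}^d\beta_if_i$ of $\Lambda$ (with $\beta_i\in\mathbb Z$) satisfies $|\beta_i|\le2^{i-1}I_d$ for $i=1,\dots,d$.
   Context: Minimal vectors are the nonzero vectors of minimal length. A $d$-dimensional lattice is perfect if $\{v\otimes v\}$, $v$ ranging over its minimal vectors, spans the $\binom{d+1}{2}$-dimensional space of symmetric tensors in $(\Lambda\otimes\mathbb R)^{\otimes2}$. A lattice is well-rounded if its minimal vectors span $\Lambda\otimes\mathbb R$. $I_d$ is the smallest integer such that whenever $\Lambda$ is a $d$-dimensional lattice and $\Lambda'\subseteq\Lambda$ is a $d$-dimensional well-rounded sublattice whose minimal vectors are all minimal vectors of $\Lambda$, the index $[\Lambda:\Lambda']$ is at most $I_d$. *)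

theory Defs
  imports "HOL-Analysis.Analysis"
begin

text \<open>Lattices in R^d are modelled as subsets of real^'n with d = CARD('n).
  Bases are indexed by 0..<d (index i here corresponds to f_(i+1) in the paper).\<close>

definition Zspan :: "(nat \<Rightarrow> real^'n) \<Rightarrow> nat \<Rightarrow> (real^'n) set" where
  "Zspan f d = {\<Sum>i<d. of_int (c i) *\<^sub>R f i | c. True}"

definition is_lattice_basis :: "(real^'n) set \<Rightarrow> (nat \<Rightarrow> real^'n) \<Rightarrow> bool" where
  "is_lattice_basis L f \<longleftrightarrow>
     inj_on f {..<CARD('n)} \<and> independent (f ` {..<CARD('n)}) \<and> L = Zspan f CARD('n)"

definition is_lattice :: "(real^'n) set \<Rightarrow> bool" where
  "is_lattice L \<longleftrightarrow> (\<exists>f. is_lattice_basis L f)"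

definition minvecs :: "(real^'n) set \<Rightarrow> (real^'n) set" where
  "minvecs L = {v \<in> L. v \<noteq> 0 \<and> (\<forall>w\<in>L. w \<noteq> 0 \<longrightarrow> norm v \<le> norm w)}"

definition outer :: "real^'n \<Rightarrow> real^'n^'n" where
  "outer v = (\<chi> i j. v $ i * v $ j)"

definition perfect :: "(real^'n) set \<Rightarrow> bool" where
  "perfect L \<longleftrightarrow> span (outer ` minvecs L) = {A :: real^'n^'n. transpose A = A}"

definition well_rounded :: "(real^'n) set \<Rightarrow> bool" where
  "well_rounded L \<longleftrightarrow> span (minvecs L) = UNIV"

definition lattice_index :: "(real^'n) set \<Rightarrow> (real^'n) set \<Rightarrow> nat" where
  "lattice_index L L' = card ((\<lambda>x. (\<lambda>y. x + y) ` L') ` L)"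

definition I_dim :: "'n::finite itself \<Rightarrow> nat" where
  "I_dim _ = (LEAST N. \<forall>(L :: (real^'n) set) L'.
      is_lattice L \<and> is_lattice L' \<and> L' \<subseteq> L \<and> well_rounded L' \<and> minvecs L' \<subseteq> minvecs L
      \<longrightarrow> lattice_index L L' \<le> N)"

end

theory Submission
  imports Defs
begin

lemma Zspan_iff: "x \<in> Zspan f d \<longleftrightarrow> (\<exists>c. x = (\<Sum>i<d. of_int (c i) *\<^sub>R f i))"
  by (auto simp: Zspan_def)

lemma Zspan_zero: "0 \<in> Zspan f d"
  unfolding Zspan_iff by (rule exI[of _ "\<lambda>_. 0"]) simp

lemma Zspan_add: assumes "x \<in> Zspan f d" "y \<in> Zspan f d" shows "x + y \<in> Zspan f d"
proof -
  from assms obtain c c' where "x = (\<Sum>i<d. of_int (c i) *\<^sub>R f i)" "y = (\<Sum>i<d. of_int (c' i) *\<^sub>R f i)"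
    by (auto simp: Zspan_iff)
  then have "x + y = (\<Sum>i<d. of_int (c i + c' i) *\<^sub>R f i)"
    by (simp add: sum.distrib scaleR_add_left)
  then show ?thesis unfolding Zspan_iff by (intro exI[of _ "\<lambda>i. c i + c' i"])
qed

lemma Zspan_scale: assumes "x \<in> Zspan f d" shows "of_int z *\<^sub>R x \<in> Zspan f d"
proof -
  from assms obtain c where "x = (\<Sum>i<d. of_int (c i) *\<^sub>R f i)"
    by (auto simp: Zspan_iff)
  then have "of_int z *\<^sub>R x = (\<Sum>i<d. of_int (z * c i) *\<^sub>R f i)"
    by (simp add: scaleR_sum_right)
  then show ?thesis unfolding Zspan_iff by (intro exI[of _ "\<lambda>i. z * c i"])
qed

lemma Zspan_neg: "x \<in> Zspan f d \<Longrightarrow> - x \<in> Zspan f d"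
proof -
  assume "x \<in> Zspan f d"
  then have "of_int (-1) *\<^sub>R x \<in> Zspan f d" by (rule Zspan_scale)
  then show "- x \<in> Zspan f d" by simp
qed

lemma Zspan_diff: "x \<in> Zspan f d \<Longrightarrow> y \<in> Zspan f d \<Longrightarrow> x - y \<in> Zspan f d"
proof -
  assume "x \<in> Zspan f d" "y \<in> Zspan f d"
  then have "x + - y \<in> Zspan f d" by (intro Zspan_add Zspan_neg)
  then show "x - y \<in> Zspan f d" by (simp only: diff_conv_add_uminus)
qed

lemma Zspan_base: assumes i: "i < d" shows "f i \<in> Zspan f d"
proof -
  have "(\<Sum>j<d. of_int (if j = i then 1 else 0) *\<^sub>R f j) = (\<Sum>j<d. if j = i then f j else 0)"
    by (rule sum.cong) auto
  also have "\<dots> = f i" using i by (simp add: sum.delta)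
  finally show ?thesis unfolding Zspan_iff by (intro exI[of _ "\<lambda>j. if j = i then 1 else 0"]) simp
qed

lemma Zspan_comb:
  assumes "\<And>k. k \<in> A \<Longrightarrow> y k \<in> Zspan f d" "finite A"
  shows "(\<Sum>k\<in>A. of_int (z k) *\<^sub>R y k) \<in> Zspan f d"
  using assms(2,1) by (induction A rule: finite_induct) (auto intro: Zspan_add Zspan_scale Zspan_zero)

lemma Zspan_subset:
  assumes "\<And>k. k < d \<Longrightarrow> y k \<in> Zspan f d'"
  shows "Zspan y d \<subseteq> Zspan f d'"
  using Zspan_comb[of "{..<d}" y f d'] assms by (auto simp: Zspan_iff)

definition isbasis :: "(nat \<Rightarrow> real^'n) \<Rightarrow> bool" where
  "isbasis u \<longleftrightarrow> inj_on u {..<CARD('n)} \<and> independent (u ` {..<CARD('n)})"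

definition coef :: "(nat \<Rightarrow> real^'n) \<Rightarrow> real^'n \<Rightarrow> nat \<Rightarrow> real" where
  "coef u x l = representation (u ` {..<CARD('n)}) x (u l)"

lemma isbasis_span:
  fixes u :: "nat \<Rightarrow> real^'n"
  assumes "isbasis u" shows "span (u ` {..<CARD('n)}) = UNIV"
proof -
  have "dim (u ` {..<CARD('n)}) = CARD('n)"
    using assms by (simp add: isbasis_def dim_eq_card_independent card_image)
  then show ?thesis using dim_eq_full[of "u ` {..<CARD('n)}"] by simp
qed

lemma coef_expand:
  fixes u :: "nat \<Rightarrow> real^'n"
  assumes "isbasis u" shows "x = (\<Sum>l<CARD('n). coef u x l *\<^sub>R u l)"
proof -
  let ?B = "u ` {..<CARD('n)}"
  have "(\<Sum>b\<in>?B. representation ?B x b *\<^sub>R b) = x"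
    using assms by (intro sum_representation_eq) (auto simp: isbasis_def isbasis_span)
  moreover have "(\<Sum>b\<in>?B. representation ?B x b *\<^sub>R b) = (\<Sum>l<CARD('n). coef u x l *\<^sub>R u l)"
    using assms by (subst sum.reindex) (auto simp: isbasis_def coef_def)
  ultimately show ?thesis by simp
qed

lemma coef_add:
  fixes u :: "nat \<Rightarrow> real^'n"
  assumes "isbasis u" shows "coef u (x + y) l = coef u x l + coef u y l"
  using assms by (simp add: coef_def representation_add isbasis_def isbasis_span)

lemma coef_scale:
  fixes u :: "nat \<Rightarrow> real^'n"
  assumes "isbasis u" shows "coef u (a *\<^sub>R x) l = a * coef u x l"
  using assms by (simp add: coef_def representation_scale isbasis_def isbasis_span)

lemma coef_diff:
  fixes u :: "nat \<Rightarrow> real^'n"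
  assumes "isbasis u" shows "coef u (x - y) l = coef u x l - coef u y l"
  using assms by (simp add: coef_def representation_diff isbasis_def isbasis_span)

lemma coef_sum:
  fixes u :: "nat \<Rightarrow> real^'n"
  assumes "isbasis u" shows "coef u (\<Sum>k\<in>A. g k) l = (\<Sum>k\<in>A. coef u (g k) l)"
  using assms by (simp add: coef_def representation_sum isbasis_def isbasis_span)

lemma coef_base:
  fixes u :: "nat \<Rightarrow> real^'n"
  assumes "isbasis u" "k < CARD('n)" "l < CARD('n)"
  shows "coef u (u k) l = (if l = k then 1 else 0)"
  using assms by (auto simp: coef_def representation_basis isbasis_def inj_on_def)

lemma coef_comb:
  fixes u :: "nat \<Rightarrow> real^'n"
  assumes "isbasis u" "l < CARD('n)"
  shows "coef u (\<Sum>k<CARD('n). c k *\<^sub>R u k) l = c l"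
  using assms by (simp add: coef_sum coef_scale coef_base if_distrib cong: if_cong)

lemma coef_eq0:
  fixes u :: "nat \<Rightarrow> real^'n"
  assumes "isbasis u" "\<And>l. l < CARD('n) \<Longrightarrow> coef u x l = 0"
  shows "x = 0"
  using coef_expand[OF assms(1), of x] assms(2) by simp


lemma perfect_span:
  fixes L :: "(real^'n) set"
  assumes "perfect L"
  shows "span (minvecs L) = UNIV"
proof (rule ccontr)
  assume ne: "span (minvecs L) \<noteq> UNIV"
  have "dim (minvecs L) < DIM(real^'n)"
    using ne dim_eq_full[of "minvecs L"] dim_subset_UNIV[of "minvecs L"] by linarith
  then obtain a :: "real^'n" where a: "a \<noteq> 0" "\<And>y. y \<in> span (minvecs L) \<Longrightarrow> orthogonal a y"
    using orthogonal_to_subspace_exists[of "minvecs L"] by blast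
  define \<Phi> where "\<Phi> A = (\<Sum>i\<in>UNIV. \<Sum>j\<in>UNIV. a$i * a$j * (A::real^'n^'n)$i$j)" for A
  have \<Phi>_outer: "\<Phi> (outer v) = (a \<bullet> v)^2" for v
  proof -
    have "(a \<bullet> v)^2 = (\<Sum>i\<in>UNIV. a$i * v$i) * (\<Sum>j\<in>UNIV. a$j * v$j)"
      by (simp add: inner_vec_def power2_eq_square)
    also have "\<dots> = \<Phi> (outer v)"
      unfolding sum_product \<Phi>_def outer_def by (simp add: algebra_simps)
    finally show ?thesis by simp
  qed
  have sub: "subspace {A. \<Phi> A = 0}"
    unfolding subspace_def \<Phi>_def
    by (simp add: algebra_simps sum.distrib sum_distrib_left[symmetric])
  have "outer ` minvecs L \<subseteq> {A. \<Phi> A = 0}"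
    using a(2) span_base[of _ "minvecs L"] by (auto simp: \<Phi>_outer orthogonal_def)
  then have "span (outer ` minvecs L) \<subseteq> {A. \<Phi> A = 0}"
    using sub span_minimal by blast
  moreover have "outer a \<in> span (outer ` minvecs L)"
    using assms unfolding perfect_def by (simp add: outer_def transpose_def vec_eq_iff mult.commute)
  ultimately have "\<Phi> (outer a) = 0" by blast
  then have "(a \<bullet> a)^2 = 0" by (simp add: \<Phi>_outer)
  then show False using a(1) by simp
qed

lemma span_basis_in:
  fixes S :: "(real^'n) set"
  assumes "span S = UNIV"
  obtains u where "isbasis u" "\<And>i. i < CARD('n) \<Longrightarrow> u i \<in> S"
proof -
  obtain B where B: "B \<subseteq> S" "independent B" "S \<subseteq> span B" "card B = dim S"
    using basis_exists by blast
  have dS: "dim S = CARD('n)" using assms dim_eq_full[of S] by simp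
  have fB: "finite B" using B(2) finiteI_independent by blast
  obtain h where h: "bij_betw h {0..<card B} B" using ex_bij_betw_nat_finite[OF fB] by blast
  have h': "bij_betw h {..<CARD('n)} B" using h B(4) dS by (simp add: atLeast0LessThan)
  have "isbasis h" unfolding isbasis_def
    using h' B(2) bij_betw_imp_inj_on bij_betw_imp_surj_on by metis
  moreover have "h i \<in> S" if "i < CARD('n)" for i
    using h' that B(1) bij_betwE by blast
  ultimately show ?thesis using that by blast
qed

lemma coef_int:
  fixes g :: "nat \<Rightarrow> real^'n"
  assumes "isbasis g" "x = (\<Sum>i<CARD('n). of_int (c i) *\<^sub>R g i)" "l < CARD('n)"
  shows "coef g x l = of_int (c l)"
  using coef_comb[OF assms(1,3), of "\<lambda>i. of_int (c i)"] assms(2) by simp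

lemma finite_bounded_lattice:
  fixes g :: "nat \<Rightarrow> real^'n"
  assumes g: "isbasis g"
  shows "finite {x \<in> Zspan g CARD('n). norm x \<le> R}"
proof -
  have "\<forall>l. \<exists>B. \<forall>x. norm (coef g x l) \<le> B * norm x"
  proof
    fix l
    have "linear (\<lambda>x. coef g x l)"
      by (rule linearI) (simp_all add: coef_add[OF g] coef_scale[OF g])
    then show "\<exists>B. \<forall>x. norm (coef g x l) \<le> B * norm x" by (rule linear_bounded)
  qed
  then obtain B where B: "\<And>l x. norm (coef g x l) \<le> B l * norm x" by metis
  define M where "M = \<lceil>(\<Sum>l<CARD('n). \<bar>B l\<bar>) * \<bar>R\<bar>\<rceil>"
  have "{x \<in> Zspan g CARD('n). norm x \<le> R} \<subseteq>
      (\<lambda>c. \<Sum>i<CARD('n). of_int (c i) *\<^sub>R g i) ` (PiE {..<CARD('n)} (\<lambda>_. {-M..M}))"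
  proof
    fix x assume x: "x \<in> {x \<in> Zspan g CARD('n). norm x \<le> R}"
    then obtain c where c: "x = (\<Sum>i<CARD('n). of_int (c i) *\<^sub>R g i)" by (auto simp: Zspan_iff)
    let ?c = "restrict c {..<CARD('n)}"
    have x': "x = (\<Sum>i<CARD('n). of_int (?c i) *\<^sub>R g i)" using c by simp
    have "?c \<in> PiE {..<CARD('n)} (\<lambda>_. {-M..M})"
    proof
      fix i assume i: "i \<in> {..<CARD('n)}"
      have "\<bar>of_int (c i)\<bar> = norm (coef g x i)" using coef_int[OF g c] i by simp
      also have "\<dots> \<le> B i * norm x" by (rule B)
      also have "\<dots> \<le> \<bar>B i\<bar> * \<bar>R\<bar>"
        using x by (intro mult_mono) auto
      also have "\<dots> \<le> (\<Sum>l<CARD('n). \<bar>B l\<bar>) * \<bar>R\<bar>"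
        using i by (intro mult_right_mono member_le_sum) auto
      finally have "\<bar>real_of_int (c i)\<bar> \<le> (\<Sum>l<CARD('n). \<bar>B l\<bar>) * \<bar>R\<bar>" .
      then have "\<bar>c i\<bar> \<le> M" unfolding M_def by linarith
      then show "?c i \<in> {-M..M}" using i by auto
    qed auto
    then show "x \<in> (\<lambda>c. \<Sum>i<CARD('n). of_int (c i) *\<^sub>R g i) ` (PiE {..<CARD('n)} (\<lambda>_. {-M..M}))"
      using x' by blast
  qed
  then show ?thesis by (rule finite_subset) (auto intro: finite_PiE)
qed

lemma minvecs_norm_eq: "v \<in> minvecs L \<Longrightarrow> w \<in> minvecs L \<Longrightarrow> norm v = norm w"
  unfolding minvecs_def by (auto intro: order.antisym)

lemma finite_minvecs:
  fixes g :: "nat \<Rightarrow> real^'n"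
  assumes g: "isbasis g" and L: "L = Zspan g CARD('n)"
  shows "finite (minvecs L)"
proof (cases "minvecs L = {}")
  case False
  then obtain m where m: "m \<in> minvecs L" by blast
  have "minvecs L \<subseteq> {x \<in> Zspan g CARD('n). norm x \<le> norm m}"
  proof
    fix x assume x: "x \<in> minvecs L"
    have "x \<in> L" using x by (simp add: minvecs_def)
    moreover have "norm x = norm m" using minvecs_norm_eq[OF x m] .
    ultimately show "x \<in> {x \<in> Zspan g CARD('n). norm x \<le> norm m}" using L by simp
  qed
  then show ?thesis using finite_bounded_lattice[OF g] finite_subset by blast
qed simp


lemma coset_eq:
  assumes "x - y \<in> Zspan b d"
  shows "(\<lambda>z. x + z) ` Zspan b d = (\<lambda>z. y + z) ` Zspan b d"
proof -
  have 1: "(\<lambda>z. x + z) ` Zspan b d \<subseteq> (\<lambda>z. y + z) ` Zspan b d" if "x - y \<in> Zspan b d" for x y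
  proof
    fix w assume "w \<in> (\<lambda>z. x + z) ` Zspan b d"
    then obtain l where l: "l \<in> Zspan b d" "w = x + l" by blast
    have "(x - y) + l \<in> Zspan b d" using that l(1) by (rule Zspan_add)
    moreover have "w = y + ((x - y) + l)" using l by simp
    ultimately show "w \<in> (\<lambda>z. y + z) ` Zspan b d" by blast
  qed
  have "y - x \<in> Zspan b d" using Zspan_neg[OF assms] by simp
  then show ?thesis using 1 assms by blast
qed

lemma coset_bound:
  fixes L L' :: "(real^'n) set" and u :: "nat \<Rightarrow> real^'n"
  assumes L: "L = Zspan g CARD('n)" and L': "L' = Zspan b CARD('n)" and sub: "L' \<subseteq> L"
    and u: "isbasis u" "\<And>i. i < CARD('n) \<Longrightarrow> u i \<in> L'" "\<And>i. i < CARD('n) \<Longrightarrow> u i \<in> minvecs L"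
  shows "finite ((\<lambda>x. (\<lambda>y. x + y) ` L') ` L) \<and> card ((\<lambda>x. (\<lambda>y. x + y) ` L') ` L) \<le> Suc CARD('n) ^ CARD('n)"
proof -
  define d where "d = CARD('n)"
  define D where "D = Suc d"
  have d0: "0 < d" unfolding d_def by simp
  define t where "t x i = coef u x i" for x i
  define cell where "cell x = restrict (\<lambda>i. nat \<lfloor>real D * frac (t x i)\<rfloor>) {..<d}" for x
  define cs where "cs x = (\<lambda>y. x + y) ` L'" for x
  define P where "P = PiE {..<d} (\<lambda>_. {..<D})"
  have cellin: "cell x \<in> P" for x
  proof -
    have "nat \<lfloor>real D * frac (t x i)\<rfloor> < D" for i
    proof -
      have "real D * frac (t x i) < real D" using frac_lt_1[of "t x i"] D_def by simp
      then have "\<lfloor>real D * frac (t x i)\<rfloor> < int D" by linarith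
      moreover have "0 \<le> \<lfloor>real D * frac (t x i)\<rfloor>" by (simp add: frac_ge_0)
      ultimately show ?thesis by (simp add: nat_less_iff)
    qed
    then show ?thesis unfolding cell_def P_def by auto
  qed
  define fl where "fl x = (\<Sum>i<d. of_int \<lfloor>t x i\<rfloor> *\<^sub>R u i)" for x
  have flL': "fl x \<in> L'" for x
    unfolding fl_def L' using u(2) unfolding L' d_def by (intro Zspan_comb) auto
  have frep: "x - fl x = (\<Sum>i<d. frac (t x i) *\<^sub>R u i)" for x
  proof -
    have "x = (\<Sum>i<d. t x i *\<^sub>R u i)" unfolding t_def d_def by (rule coef_expand[OF u(1)])
    then have "x - fl x = (\<Sum>i<d. t x i *\<^sub>R u i - of_int \<lfloor>t x i\<rfloor> *\<^sub>R u i)"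
      unfolding fl_def by (simp add: sum_subtractf)
    also have "\<dots> = (\<Sum>i<d. frac (t x i) *\<^sub>R u i)"
      by (simp add: frac_def scaleR_diff_left)
    finally show ?thesis .
  qed
  have u0: "u 0 \<in> minvecs L" using u(3) d0 d_def by simp
  have lam: "0 < norm (u 0)" using u0 by (simp add: minvecs_def)
  have flL: "fl x \<in> L" for x using flL' sub by blast
  have key: "x - y \<in> L'" if xy: "x \<in> L" "y \<in> L" "cell x = cell y" for x y
  proof -
    define z where "z = (x - fl x) - (y - fl y)"
    have X: "x \<in> Zspan g CARD('n)" "y \<in> Zspan g CARD('n)" "fl x \<in> Zspan g CARD('n)" "fl y \<in> Zspan g CARD('n)"
      using xy(1,2) flL[of x] flL[of y] by (simp_all only: L)
    have zL: "z \<in> L" unfolding z_def L by (intro Zspan_diff X)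
    have zs: "z = (\<Sum>i<d. (frac (t x i) - frac (t y i)) *\<^sub>R u i)"
      unfolding z_def frep by (simp only: sum_subtractf scaleR_diff_left)
    have dl: "\<bar>frac (t x i) - frac (t y i)\<bar> < 1 / real D" if i: "i < d" for i
    proof -
      have "cell x i = cell y i" using xy(3) by simp
      then have "nat \<lfloor>real D * frac (t x i)\<rfloor> = nat \<lfloor>real D * frac (t y i)\<rfloor>"
        using i unfolding cell_def by simp
      moreover have "0 \<le> \<lfloor>real D * frac (t x i)\<rfloor>" "0 \<le> \<lfloor>real D * frac (t y i)\<rfloor>"
        by (simp_all add: frac_ge_0)
      ultimately have "\<lfloor>real D * frac (t x i)\<rfloor> = \<lfloor>real D * frac (t y i)\<rfloor>"
        by (metis eq_nat_nat_iff)
      then have "\<bar>real D * frac (t x i) - real D * frac (t y i)\<bar> < 1" by linarith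
      moreover have "real D * frac (t x i) - real D * frac (t y i) = real D * (frac (t x i) - frac (t y i))"
        by (simp only: right_diff_distrib)
      ultimately have "real D * \<bar>frac (t x i) - frac (t y i)\<bar> < 1"
        by (simp only: abs_mult abs_of_nat)
      then have "\<bar>frac (t x i) - frac (t y i)\<bar> * real D < 1" by (simp only: mult.commute)
      moreover have D0: "0 < real D" using D_def by simp
      ultimately show ?thesis using pos_less_divide_eq[OF D0] by blast
    qed
    have nu: "norm (u i) = norm (u 0)" if "i < d" for i
      by (rule minvecs_norm_eq[OF u(3) u0]) (use that d_def in simp)
    have "norm z \<le> (\<Sum>i<d. norm ((frac (t x i) - frac (t y i)) *\<^sub>R u i))"
      unfolding zs by (rule norm_sum)
    also have "\<dots> = (\<Sum>i<d. \<bar>frac (t x i) - frac (t y i)\<bar> * norm (u 0))"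
    proof (rule sum.cong)
      fix i assume i: "i \<in> {..<d}"
      have "norm (u i) = norm (u 0)" by (rule nu) (use i in simp)
      then show "norm ((frac (t x i) - frac (t y i)) *\<^sub>R u i) = \<bar>frac (t x i) - frac (t y i)\<bar> * norm (u 0)"
        by (simp only: norm_scaleR real_norm_def)
    qed simp
    also have "\<dots> < (\<Sum>i<d. 1 / real D * norm (u 0))"
    proof (rule sum_strict_mono)
      fix i assume "i \<in> {..<d}"
      then show "\<bar>frac (t x i) - frac (t y i)\<bar> * norm (u 0) < 1 / real D * norm (u 0)"
        using dl lam by (intro mult_strict_right_mono) auto
    qed (use d0 in auto)
    also have "\<dots> = real d / real D * norm (u 0)" by simp
    also have "\<dots> \<le> norm (u 0)" using lam D_def by (simp add: field_simps)
    finally have lt: "norm z < norm (u 0)" .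
    have "z = 0"
    proof (rule ccontr)
      assume "z \<noteq> 0"
      then have "norm (u 0) \<le> norm z" using u0 zL unfolding minvecs_def by blast
      then show False using lt by simp
    qed
    then have "x - y = fl x - fl y" unfolding z_def by (simp add: algebra_simps)
    moreover have "fl x - fl y \<in> L'" using flL'[of x] flL'[of y] unfolding L' by (rule Zspan_diff)
    ultimately show ?thesis by simp
  qed
  define R where "R c = cs (SOME x. x \<in> L \<and> cell x = c)" for c
  have sub2: "cs ` L \<subseteq> R ` P"
  proof
    fix C assume "C \<in> cs ` L"
    then obtain x where x: "x \<in> L" "C = cs x" by blast
    define x' where "x' = (SOME x'. x' \<in> L \<and> cell x' = cell x)"
    have x': "x' \<in> L \<and> cell x' = cell x" unfolding x'_def by (rule someI[of _ x]) (simp add: x)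
    then have "x - x' \<in> L'" using key x by metis
    then have "cs x = cs x'" unfolding cs_def L' by (rule coset_eq)
    then have "C = R (cell x)" using x unfolding R_def x'_def by simp
    then show "C \<in> R ` P" using cellin by blast
  qed
  have fP: "finite P" unfolding P_def by (simp add: finite_PiE)
  have cP: "card P = D ^ d" unfolding P_def by (simp add: card_PiE)
  have "finite (cs ` L)" using sub2 fP finite_subset by blast
  moreover have "card (cs ` L) \<le> D ^ d"
    using card_mono[OF finite_imageI[OF fP] sub2] card_image_le[OF fP, of R] cP by linarith
  ultimately show ?thesis unfolding cs_def D_def d_def by simp
qed

lemma I_dim_prop:
  fixes L L' :: "(real^'n) set"
  assumes "is_lattice L" "is_lattice L'" "L' \<subseteq> L" "well_rounded L'" "minvecs L' \<subseteq> minvecs L"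
  shows "lattice_index L L' \<le> I_dim TYPE('n)"
proof -
  let ?P = "\<lambda>N. \<forall>(L :: (real^'n) set) L'.
      is_lattice L \<and> is_lattice L' \<and> L' \<subseteq> L \<and> well_rounded L' \<and> minvecs L' \<subseteq> minvecs L
      \<longrightarrow> lattice_index L L' \<le> N"
  have "?P (Suc CARD('n) ^ CARD('n))"
  proof (intro allI impI)
    fix L L' :: "(real^'n) set"
    assume h: "is_lattice L \<and> is_lattice L' \<and> L' \<subseteq> L \<and> well_rounded L' \<and> minvecs L' \<subseteq> minvecs L"
    then obtain g b where g: "L = Zspan g CARD('n)" and b: "L' = Zspan b CARD('n)"
      by (auto simp: is_lattice_def is_lattice_basis_def)
    obtain u where u: "isbasis u" "\<And>i. i < CARD('n) \<Longrightarrow> u i \<in> minvecs L'"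
      using span_basis_in[of "minvecs L'"] h unfolding well_rounded_def by blast
    have "u i \<in> L'" if "i < CARD('n)" for i using u(2)[OF that] by (simp add: minvecs_def)
    moreover have "u i \<in> minvecs L" if "i < CARD('n)" for i using u(2)[OF that] h by blast
    ultimately show "lattice_index L L' \<le> Suc CARD('n) ^ CARD('n)"
      unfolding lattice_index_def using coset_bound[OF g b _ u(1)] h by blast
  qed
  then have "?P (I_dim TYPE('n))" unfolding I_dim_def by (rule LeastI)
  then show ?thesis using assms by blast
qed


definition matw :: "('n::finite \<Rightarrow> nat) \<Rightarrow> (nat \<Rightarrow> real^'n) \<Rightarrow> real^'n^'n" where
  "matw hh w = (\<chi> i. w (hh i))"

lemma row_matw: "row i (matw hh w) = w (hh i)"
  by (simp add: row_def matw_def vec_eq_iff)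

lemma rows_matw:
  fixes hh :: "'n::finite \<Rightarrow> nat"
  assumes "bij_betw hh UNIV {..<CARD('n)}"
  shows "rows (matw hh w) = w ` {..<CARD('n)}"
proof -
  have "rows (matw hh w) = w ` (hh ` UNIV)" by (auto simp: rows_def row_matw)
  then show ?thesis using assms by (simp add: bij_betw_def)
qed

lemma det_matw_nz:
  fixes hh :: "'n::finite \<Rightarrow> nat"
  assumes "bij_betw hh UNIV {..<CARD('n)}" "isbasis w"
  shows "det (matw hh w) \<noteq> 0"
proof -
  have "rank (matw hh w) = CARD('n)"
  proof -
    have "dim (w ` {..<CARD('n)}) = CARD('n)"
      using assms(2) unfolding isbasis_def using dim_eq_card_independent card_image by fastforce
    then show ?thesis by (simp only: row_rank_def rows_matw[OF assms(1)])
  qed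
  then show ?thesis by (simp add: det_eq_0_rank)
qed

lemma matw_isbasis:
  fixes hh :: "'n::finite \<Rightarrow> nat"
  assumes "bij_betw hh UNIV {..<CARD('n)}" "det (matw hh w) \<noteq> 0"
  shows "isbasis w"
proof -
  let ?B = "w ` {..<CARD('n)}"
  have "\<not> rank (matw hh w) < CARD('n)" using assms(2) det_eq_0_rank by blast
  moreover have "rank (matw hh w) \<le> CARD('n)" using rank_bound[of "matw hh w"] by simp
  ultimately have r: "rank (matw hh w) = CARD('n)" by linarith
  have dB: "dim ?B = CARD('n)"
    using r by (simp only: row_rank_def rows_matw[OF assms(1)])
  have cB: "card ?B \<le> CARD('n)" using card_image_le[of "{..<CARD('n)}" w] by simp
  have ind: "independent ?B"
  proof (rule card_le_dim_spanning[of ?B ?B])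
    show "?B \<subseteq> span ?B" by (rule span_superset)
    show "card ?B \<le> dim ?B" using dB cB by linarith
  qed auto
  have "card ?B = CARD('n)" using dB dim_eq_card_independent[OF ind] by simp
  then have "inj_on w {..<CARD('n)}" by (intro eq_card_imp_inj_on) auto
  then show ?thesis using ind by (simp add: isbasis_def)
qed

lemma det_replace:
  fixes hh :: "'n::finite \<Rightarrow> nat" and w :: "nat \<Rightarrow> real^'n"
  assumes hh: "bij_betw hh UNIV {..<CARD('n)}" and w: "isbasis w" and k: "k < CARD('n)"
  shows "det (matw hh (w(k := v))) = coef w v k * det (matw hh w)"
proof -
  define A where "A = matw hh w"
  define ih where "ih = inv_into UNIV hh"
  define i0 where "i0 = ih k"
  have hih: "hh (ih l) = l" if "l < CARD('n)" for l
    using hh that unfolding ih_def by (simp add: bij_betw_inv_into_right)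
  have ihh: "ih (hh i) = i" for i
    using hh unfolding ih_def by (simp add: bij_betw_def)
  define c where "c = coef w v"
  define x where "x = (\<Sum>l\<in>{..<CARD('n)} - {k}. c l *\<^sub>R w l)"
  have vx: "v = c k *\<^sub>R w k + x"
  proof -
    have "v = (\<Sum>l<CARD('n). c l *\<^sub>R w l)" unfolding c_def by (rule coef_expand[OF w])
    also have "\<dots> = c k *\<^sub>R w k + x" unfolding x_def using k by (simp add: sum.remove)
    finally show ?thesis .
  qed
  define A' where "A' = (\<chi> i. if i = i0 then c k *\<^sub>R w k else row i A)"
  have rA': "row j A' = (if j = i0 then c k *\<^sub>R w k else row j A)" for j
    by (simp add: A'_def row_def vec_eq_iff)
  have xs: "x \<in> vec.span {row j A' |j. j \<noteq> i0}"
    unfolding span_vec_eq x_def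
  proof (intro span_sum span_scale span_base)
    fix l assume l: "l \<in> {..<CARD('n)} - {k}"
    have "ih l \<noteq> i0"
    proof
      assume "ih l = i0"
      then have "hh (ih l) = hh (ih k)" unfolding i0_def by simp
      then show False using hih[of l] hih[OF k] l by simp
    qed
    moreover have "w l = row (ih l) A'" using l hih calculation by (simp add: rA' A_def row_matw)
    ultimately show "w l \<in> {row j A' |j. j \<noteq> i0}" by blast
  qed
  have "matw hh (w(k := v)) = (\<chi> j. if j = i0 then row i0 A' + x else row j A')"
  proof -
    have eqv: "hh j = k \<longleftrightarrow> j = i0" for j
    proof
      assume "hh j = k"
      then have "ih (hh j) = ih k" by simp
      then show "j = i0" unfolding i0_def ihh .
    next
      assume "j = i0"
      then show "hh j = k" unfolding i0_def using hih[OF k] by simp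
    qed
    have rA2: "row j A' = (if j = i0 then c k *\<^sub>R w k else w (hh j))" for j
      by (simp add: rA' A_def row_matw)
    show ?thesis unfolding matw_def
      by (rule Cart_lambda_cong) (simp add: rA2 vx eqv)
  qed
  also have "det \<dots> = det A'" by (rule det_row_span[OF xs])
  also have "det A' = c k * det (\<chi> i. if i = i0 then w k else row i A)"
    unfolding A'_def using det_row_mul[of i0 "c k" "\<lambda>i. w k" "\<lambda>i. row i A"]
    unfolding scalar_mult_eq_scaleR .
  moreover have "(\<chi> i. if i = i0 then w k else row i A) = A"
  proof -
    have rA: "row i A = w (hh i)" for i by (simp add: A_def row_matw)
    have hk: "hh i0 = k" unfolding i0_def by (rule hih[OF k])
    have "(\<chi> i. if i = i0 then w k else row i A) = (\<chi> i. w (hh i))"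
      by (rule Cart_lambda_cong) (simp add: rA hk)
    then show ?thesis by (simp only: A_def matw_def)
  qed
  ultimately have "det (matw hh (w(k := v))) = c k * det A" by (simp only:)
  then show ?thesis by (simp only: A_def c_def)
qed


locale mc =
  fixes L :: "(real^'n::finite) set" and g w :: "nat \<Rightarrow> real^'n"
  assumes g: "isbasis g" and Lg: "L = Zspan g CARD('n)" and w: "isbasis w"
    and wmin: "\<And>i. i < CARD('n) \<Longrightarrow> w i \<in> minvecs L"
    and wmax: "\<And>v k. v \<in> minvecs L \<Longrightarrow> k < CARD('n) \<Longrightarrow> \<bar>coef w v k\<bar> \<le> 1"
begin

definition M where "M = Zspan w CARD('n)"
definition cos where "cos = (\<lambda>x. (\<lambda>y. x + y) ` M) ` L"
definition K where "K = card cos"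

lemma wL: "i < CARD('n) \<Longrightarrow> w i \<in> L"
  using wmin by (simp add: minvecs_def)

lemma L_add: "x \<in> L \<Longrightarrow> y \<in> L \<Longrightarrow> x + y \<in> L"
  unfolding Lg by (rule Zspan_add)
lemma L_diff: "x \<in> L \<Longrightarrow> y \<in> L \<Longrightarrow> x - y \<in> L"
  unfolding Lg by (rule Zspan_diff)
lemma L_scale: "x \<in> L \<Longrightarrow> of_int z *\<^sub>R x \<in> L"
  unfolding Lg by (rule Zspan_scale)
lemma L_zero: "0 \<in> L"
  unfolding Lg by (rule Zspan_zero)
lemma L_comb: "(\<And>k. k \<in> A \<Longrightarrow> y k \<in> L) \<Longrightarrow> finite A \<Longrightarrow> (\<Sum>k\<in>A. of_int (z k) *\<^sub>R y k) \<in> L"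
  unfolding Lg by (rule Zspan_comb)

lemma M_sub: "M \<subseteq> L"
  unfolding M_def Lg by (rule Zspan_subset) (use wL Lg in simp)

lemma w0: "w 0 \<in> minvecs L" using wmin by simp

lemma w_minM: "i < CARD('n) \<Longrightarrow> w i \<in> minvecs M"
proof -
  assume i: "i < CARD('n)"
  have "w i \<in> M" unfolding M_def using i by (rule Zspan_base)
  moreover have "w i \<noteq> 0" using wmin[OF i] by (simp add: minvecs_def)
  moreover have "\<forall>y\<in>M. y \<noteq> 0 \<longrightarrow> norm (w i) \<le> norm y"
    using wmin[OF i] M_sub unfolding minvecs_def by blast
  ultimately show ?thesis unfolding minvecs_def by blast
qed

lemma minM_sub: "minvecs M \<subseteq> minvecs L"
proof
  fix y assume y: "y \<in> minvecs M"
  have w0M: "w 0 \<in> M" using w_minM[of 0] by (simp add: minvecs_def)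
  have "y \<in> L" "y \<noteq> 0" "norm y \<le> norm (w 0)"
    using y M_sub w0M w_minM[of 0] unfolding minvecs_def by (auto simp: minvecs_def)
  moreover have "\<forall>z\<in>L. z \<noteq> 0 \<longrightarrow> norm (w 0) \<le> norm z" using w0 unfolding minvecs_def by blast
  ultimately show "y \<in> minvecs L" unfolding minvecs_def by force
qed

lemma M_lat: "is_lattice M"
  using w unfolding is_lattice_def is_lattice_basis_def isbasis_def M_def by blast

lemma L_lat: "is_lattice L"
  using g Lg unfolding is_lattice_def is_lattice_basis_def isbasis_def by blast

lemma M_wr: "well_rounded M"
proof -
  have "w ` {..<CARD('n)} \<subseteq> minvecs M" using w_minM by auto
  then have "span (w ` {..<CARD('n)}) \<subseteq> span (minvecs M)" by (rule span_mono)
  then show ?thesis using isbasis_span[OF w] unfolding well_rounded_def by auto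
qed

lemma idx_le: "lattice_index L M \<le> I_dim TYPE('n)"
  by (rule I_dim_prop) (use L_lat M_lat M_sub M_wr minM_sub in auto)

lemma fin_cos: "finite cos"
proof -
  have "w i \<in> M" if "i < CARD('n)" for i using w_minM[OF that] by (simp add: minvecs_def)
  then show ?thesis unfolding cos_def
    using coset_bound[OF Lg M_def M_sub w _ wmin] by blast
qed

lemma cos_diff:
  assumes "(\<lambda>y. a + y) ` M = (\<lambda>y. b + y) ` M"
  shows "a - b \<in> M"
proof -
  have "a + 0 \<in> (\<lambda>y. a + y) ` M" using Zspan_zero unfolding M_def by blast
  then have "a \<in> (\<lambda>y. b + y) ` M" using assms by simp
  then obtain l where "l \<in> M" "a = b + l" by blast
  then show ?thesis by simp
qed

lemma mult_in_M:
  assumes x: "x \<in> L"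
  shows "\<exists>m. 0 < m \<and> m \<le> K \<and> of_nat m *\<^sub>R x \<in> M"
proof -
  define \<phi> where "\<phi> a = (\<lambda>y. of_nat a *\<^sub>R x + y) ` M" for a :: nat
  have sub: "\<phi> ` {0..K} \<subseteq> cos"
  proof
    fix C assume "C \<in> \<phi> ` {0..K}"
    then obtain a where C: "C = \<phi> a" by blast
    have "of_int (int a) *\<^sub>R x \<in> L" using x by (rule L_scale)
    then have "of_nat a *\<^sub>R x \<in> L" by simp
    then show "C \<in> cos" unfolding C \<phi>_def cos_def by blast
  qed
  have "card (\<phi> ` {0..K}) \<le> K" using card_mono[OF fin_cos sub] by (simp only: K_def)
  then have "card (\<phi> ` {0..K}) < card {0..K}" by simp
  then have "\<not> inj_on \<phi> {0..K}" by (rule pigeonhole)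
  then obtain a b where ab: "a \<in> {0..K}" "b \<in> {0..K}" "a \<noteq> b" "\<phi> a = \<phi> b"
    unfolding inj_on_def by blast
  have abM: "of_nat a *\<^sub>R x - of_nat b *\<^sub>R x \<in> M"
    using ab(4) unfolding \<phi>_def by (rule cos_diff)
  show ?thesis
  proof (cases "b < a")
    case True
    have "of_nat (a - b) *\<^sub>R x = of_nat a *\<^sub>R x - of_nat b *\<^sub>R x"
      using True by (simp add: of_nat_diff scaleR_diff_left)
    then show ?thesis using True ab abM by (intro exI[of _ "a - b"]) auto
  next
    case False
    then have ba: "a < b" using ab(3) by simp
    have "of_nat (b - a) *\<^sub>R x = - (of_nat a *\<^sub>R x - of_nat b *\<^sub>R x)"
      using ba by (simp add: of_nat_diff scaleR_diff_left)
    moreover have "- (of_nat a *\<^sub>R x - of_nat b *\<^sub>R x) \<in> M"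
      using abM unfolding M_def by (rule Zspan_neg)
    ultimately show ?thesis using ba ab by (intro exI[of _ "b - a"]) auto
  qed
qed

lemma fact_in_M:
  assumes x: "x \<in> L"
  shows "real (fact K) *\<^sub>R x \<in> M"
proof -
  obtain m where m: "0 < m" "m \<le> K" "of_nat m *\<^sub>R x \<in> M" using mult_in_M[OF x] by blast
  have "m dvd fact K" using m by (intro dvd_fact) auto
  then obtain q where q: "fact K = m * q" by blast
  have "real (fact K) *\<^sub>R x = of_int (int q) *\<^sub>R (of_nat m *\<^sub>R x)"
    by (simp add: q)
  also have "\<dots> \<in> M" using m(3) unfolding M_def by (rule Zspan_scale)
  finally show ?thesis .
qed

lemma M_coef:
  assumes "y \<in> M" "l < CARD('n)"
  shows "\<exists>z. coef w y l = of_int z"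
proof -
  obtain c where "y = (\<Sum>i<CARD('n). of_int (c i) *\<^sub>R w i)" using assms(1) unfolding M_def Zspan_iff by blast
  then show ?thesis using coef_int[OF w _ assms(2)] by blast
qed

lemma L_coef:
  assumes "x \<in> L" "l < CARD('n)"
  shows "\<exists>z. real (fact K) * coef w x l = of_int z"
  using M_coef[OF fact_in_M[OF assms(1)] assms(2)] by (simp add: coef_scale[OF w])

end


context mc begin

definition flag where "flag j x \<longleftrightarrow> (\<forall>l<j. coef w x l = 0)"
definition S where "S j = {coef w x j | x. x \<in> L \<and> flag j x \<and> 0 < coef w x j \<and> coef w x j \<le> 1}"
definition e where "e j = Min (S j)"

lemma coef_w: "k < CARD('n) \<Longrightarrow> l < CARD('n) \<Longrightarrow> coef w (w k) l = (if l = k then 1 else 0)"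
  by (rule coef_base[OF w])

lemma S_fin: assumes j: "j < CARD('n)" shows "finite (S j)"
proof -
  define F where "F = real (fact K)"
  have F0: "0 < F" unfolding F_def by simp
  have "S j \<subseteq> (\<lambda>z. of_int z / F) ` {1..int (fact K)}"
  proof
    fix s assume "s \<in> S j"
    then obtain x where x: "x \<in> L" "s = coef w x j" "0 < s" "s \<le> 1" unfolding S_def by blast
    obtain z where z: "F * s = of_int z" using L_coef[OF x(1) j] x(2) unfolding F_def by blast
    have "(0::real) < of_int z" using z x(3) F0 by (metis mult_pos_pos)
    then have z1: "1 \<le> z" by simp
    have "of_int z \<le> F" using z x(4) F0 by (metis mult_left_le mult.commute less_imp_le)
    then have z2: "z \<le> int (fact K)" unfolding F_def by (metis of_int_le_iff of_int_of_nat_eq of_nat_fact)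
    have "s = of_int z / F" using z F0 by (simp add: field_simps)
    then show "s \<in> (\<lambda>z. of_int z / F) ` {1..int (fact K)}" using z1 z2 by auto
  qed
  then show ?thesis by (rule finite_subset) simp
qed

lemma S_one: assumes j: "j < CARD('n)" shows "1 \<in> S j"
proof -
  have "flag j (w j)" unfolding flag_def using j by (simp add: coef_w)
  moreover have "coef w (w j) j = 1" using j by (simp add: coef_w)
  ultimately have "1 = coef w (w j) j \<and> w j \<in> L \<and> flag j (w j) \<and> 0 < coef w (w j) j \<and> coef w (w j) j \<le> 1"
    using wL[OF j] by simp
  then show ?thesis unfolding S_def by blast
qed

lemma e_in: "j < CARD('n) \<Longrightarrow> e j \<in> S j"
  unfolding e_def using S_fin S_one by (intro Min_in) auto

lemma e_le: "j < CARD('n) \<Longrightarrow> s \<in> S j \<Longrightarrow> e j \<le> s"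
  unfolding e_def using S_fin by (intro Min_le) auto

lemma e_pos: assumes "j < CARD('n)" shows "0 < e j \<and> e j \<le> 1"
proof -
  have "e j \<in> S j" using assms by (rule e_in)
  then obtain x where "e j = coef w x j" "0 < coef w x j" "coef w x j \<le> 1" unfolding S_def by blast
  then show ?thesis by simp
qed

lemma e_min:
  assumes "j < CARD('n)" "x \<in> L" "flag j x" "0 < coef w x j"
  shows "e j \<le> coef w x j"
proof (cases "coef w x j \<le> 1")
  case True
  then have "coef w x j \<in> S j" unfolding S_def using assms by blast
  then show ?thesis using e_le[OF assms(1)] by blast
next
  case False
  then show ?thesis using e_pos[OF assms(1)] by linarith
qed

definition f0 where "f0 j = (SOME x. x \<in> L \<and> flag j x \<and> coef w x j = e j)"

lemma f0: assumes "j < CARD('n)" shows "f0 j \<in> L \<and> flag j (f0 j) \<and> coef w (f0 j) j = e j"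
proof -
  obtain x where "e j = coef w x j" "x \<in> L" "flag j x" using e_in[OF assms] unfolding S_def by blast
  then have "\<exists>x. x \<in> L \<and> flag j x \<and> coef w x j = e j" by auto
  then show ?thesis unfolding f0_def by (rule someI_ex)
qed

lemma divis:
  assumes j: "j < CARD('n)" and x: "x \<in> L" "flag j x"
  shows "\<exists>z. coef w x j = of_int z * e j"
proof -
  define c where "c = coef w x j"
  have e0: "0 < e j" using e_pos[OF j] by simp
  define z where "z = \<lfloor>c / e j\<rfloor>"
  define y where "y = x - of_int z *\<^sub>R f0 j"
  have yL: "y \<in> L" unfolding y_def using x(1) f0[OF j] by (intro L_diff L_scale) auto
  have cy: "coef w y l = coef w x l - of_int z * coef w (f0 j) l" for l
    unfolding y_def by (simp add: coef_diff[OF w] coef_scale[OF w])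
  have fy: "flag j y" unfolding flag_def
    using x(2) f0[OF j] unfolding flag_def by (simp add: cy)
  have cyj: "coef w y j = c - of_int z * e j" using cy f0[OF j] unfolding c_def by simp
  have "of_int z \<le> c / e j" "c / e j < of_int z + 1" unfolding z_def by linarith+
  then have "of_int z * e j \<le> c" "c < (of_int z + 1) * e j" using e0 by (simp_all add: field_simps)
  then have lo: "0 \<le> coef w y j" and hi: "coef w y j < e j" unfolding cyj by (simp_all add: algebra_simps)
  have "coef w y j = 0"
  proof (rule ccontr)
    assume "coef w y j \<noteq> 0"
    then have "0 < coef w y j" using lo by simp
    then have "e j \<le> coef w y j" using e_min[OF j yL fy] by blast
    then show False using hi by simp
  qed
  then have "c = of_int z * e j" unfolding cyj by simp
  then show ?thesis unfolding c_def by blast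
qed

definition n where "n j = \<lfloor>1 / e j\<rfloor>"

lemma n_eq: assumes j: "j < CARD('n)" shows "of_int (n j) * e j = 1 \<and> 1 \<le> n j"
proof -
  have "flag j (w j)" unfolding flag_def using j by (simp add: coef_w)
  then obtain z where z: "coef w (w j) j = of_int z * e j" using divis[OF j wL[OF j]] by blast
  then have z1: "of_int z * e j = 1" using j by (simp add: coef_w)
  have e0: "0 < e j" using e_pos[OF j] by simp
  then have "1 / e j = of_int z" using z1 by (simp add: field_simps)
  then have "n j = z" unfolding n_def by simp
  moreover have "0 < z"
  proof -
    have "(0::real) < of_int z * e j" using z1 by simp
    then have "(0::real) < of_int z" using e0 by (simp add: zero_less_mult_iff)
    then show ?thesis by simp
  qed
  ultimately show ?thesis using z1 by simp
qed

end


context mc begin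

definition f where
  "f j = f0 j - (\<Sum>l\<in>{j<..<CARD('n)}. of_int \<lfloor>coef w (f0 j) l\<rfloor> *\<^sub>R w l)"

lemma coef_wsum:
  assumes A: "A \<subseteq> {..<CARD('n)}" and l: "l < CARD('n)"
  shows "coef w (\<Sum>m\<in>A. a m *\<^sub>R w m) l = (if l \<in> A then a l else 0)"
proof -
  have fA: "finite A" using A finite_subset by blast
  have "coef w (\<Sum>m\<in>A. a m *\<^sub>R w m) l = (\<Sum>m\<in>A. a m * coef w (w m) l)"
    by (simp add: coef_sum[OF w] coef_scale[OF w])
  also have "\<dots> = (\<Sum>m\<in>A. if l = m then a m else 0)"
  proof (rule sum.cong)
    fix m assume "m \<in> A"
    then have "m < CARD('n)" using A by blast
    then show "a m * coef w (w m) l = (if l = m then a m else 0)" using l by (simp add: coef_w)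
  qed simp
  also have "\<dots> = (if l \<in> A then a l else 0)" using fA by (simp add: sum.delta)
  finally show ?thesis .
qed

lemma f_L: "j < CARD('n) \<Longrightarrow> f j \<in> L"
  unfolding f_def using f0 by (intro L_diff L_comb wL) auto

lemma f_coef:
  assumes j: "j < CARD('n)" and l: "l < CARD('n)"
  shows "coef w (f j) l = coef w (f0 j) l - (if l \<in> {j<..<CARD('n)} then of_int \<lfloor>coef w (f0 j) l\<rfloor> else 0)"
  unfolding f_def coef_diff[OF w]
  by (subst coef_wsum) (use l in auto)

lemma f_lo: assumes "j < CARD('n)" "l < j" shows "coef w (f j) l = 0"
proof -
  have "coef w (f0 j) l = 0" using f0[OF assms(1)] assms(2) unfolding flag_def by blast
  then show ?thesis using assms by (simp add: f_coef)
qed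

lemma f_diag: assumes "j < CARD('n)" shows "coef w (f j) j = e j"
  using assms f0[OF assms] by (simp add: f_coef)

lemma f_hi: assumes "j < l" "l < CARD('n)" shows "0 \<le> coef w (f j) l \<and> coef w (f j) l < 1"
proof -
  have j: "j < CARD('n)" using assms by simp
  have "coef w (f j) l = coef w (f0 j) l - of_int \<lfloor>coef w (f0 j) l\<rfloor>"
    using assms j by (simp add: f_coef)
  then show ?thesis by linarith
qed

lemma f_flag: "j < CARD('n) \<Longrightarrow> flag j (f j)"
  unfolding flag_def by (simp add: f_lo)

lemma L_sub_f_aux:
  "\<forall>x. x \<in> L \<longrightarrow> flag (CARD('n) - m) x \<longrightarrow> x \<in> Zspan f CARD('n)"
proof (induction m)
  case 0
  show ?case
  proof (intro allI impI)
    fix x assume "x \<in> L" "flag (CARD('n) - 0) x"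
    then have "x = 0" unfolding flag_def by (intro coef_eq0[OF w]) simp
    then show "x \<in> Zspan f CARD('n)" by (simp add: Zspan_zero)
  qed
next
  case (Suc m)
  show ?case
  proof (cases "CARD('n) \<le> m")
    case True
    then have "CARD('n) - Suc m = CARD('n) - m" by simp
    then show ?thesis using Suc.IH by simp
  next
    case False
    define j where "j = CARD('n) - Suc m"
    have j: "j < CARD('n)" and jm: "CARD('n) - m = Suc j" using False unfolding j_def by auto
    show ?thesis
    proof (intro allI impI)
      fix x assume x: "x \<in> L" "flag (CARD('n) - Suc m) x"
      have xf: "flag j x" using x(2) by (simp only: j_def)
      obtain z where z: "coef w x j = of_int z * e j" using divis[OF j x(1) xf] by blast
      define y where "y = x - of_int z *\<^sub>R f j"
      have yL: "y \<in> L" unfolding y_def using x(1) f_L[OF j] by (intro L_diff L_scale)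
      have cy: "coef w y l = coef w x l - of_int z * coef w (f j) l" for l
        unfolding y_def by (simp add: coef_diff[OF w] coef_scale[OF w])
      have "flag (Suc j) y" unfolding flag_def
      proof (intro allI impI)
        fix l assume "l < Suc j"
        then consider "l < j" | "l = j" by linarith
        then show "coef w y l = 0"
        proof cases
          case 1
          then show ?thesis using xf f_lo[OF j] unfolding cy flag_def by simp
        next
          case 2
          then show ?thesis using z f_diag[OF j] unfolding cy by simp
        qed
      qed
      then have "y \<in> Zspan f CARD('n)" using Suc.IH yL jm by simp
      moreover have "of_int z *\<^sub>R f j \<in> Zspan f CARD('n)" using j by (intro Zspan_scale Zspan_base)
      ultimately have "y + of_int z *\<^sub>R f j \<in> Zspan f CARD('n)" by (rule Zspan_add)
      then show "x \<in> Zspan f CARD('n)" unfolding y_def by simp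
    qed
  qed
qed

lemma L_eq_f: "L = Zspan f CARD('n)"
proof
  show "L \<subseteq> Zspan f CARD('n)"
    using L_sub_f_aux[of "CARD('n)"] unfolding flag_def by auto
  show "Zspan f CARD('n) \<subseteq> L"
    unfolding Lg by (rule Zspan_subset) (use f_L Lg in simp)
qed

lemma Zspan_in_span: "Zspan u d \<subseteq> span (u ` {..<d})"
proof
  fix x assume "x \<in> Zspan u d"
  then obtain c where x: "x = (\<Sum>i<d. of_int (c i) *\<^sub>R u i)" unfolding Zspan_iff by blast
  show "x \<in> span (u ` {..<d})" unfolding x
    by (intro span_sum span_scale span_base) auto
qed

lemma f_isbasis: "isbasis f"
proof -
  let ?B = "f ` {..<CARD('n)}"
  have "w ` {..<CARD('n)} \<subseteq> span ?B"
    using wL L_eq_f Zspan_in_span[of f "CARD('n)"] by auto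
  then have "span (w ` {..<CARD('n)}) \<subseteq> span ?B" by (simp add: span_minimal)
  then have sp: "span ?B = UNIV" using isbasis_span[OF w] by auto
  have cB: "card ?B \<le> CARD('n)" using card_image_le[of "{..<CARD('n)}" f] by simp
  have ind: "independent ?B"
    by (rule card_le_dim_spanning[of ?B UNIV]) (use sp cB in auto)
  have "card ?B = dim ?B" using dim_eq_card_independent[OF ind] by simp
  also have "\<dots> = CARD('n)" using sp dim_eq_full[of ?B] by simp
  finally have "inj_on f {..<CARD('n)}" by (intro eq_card_imp_inj_on) auto
  then show ?thesis using ind unfolding isbasis_def by simp
qed

lemma f_lattice_basis: "is_lattice_basis L f"
  using f_isbasis L_eq_f unfolding isbasis_def is_lattice_basis_def by simp

end


context mc begin

lemma n_pos: "j < CARD('n) \<Longrightarrow> 1 \<le> n j" using n_eq by blast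

lemma prod_le: "(\<Prod>k<CARD('n). n k) \<le> int (lattice_index L M)"
proof -
  define T where "T = PiE {..<CARD('n)} (\<lambda>k. {0..<n k})"
  define X where "X t = (\<Sum>k<CARD('n). of_int (t k) *\<^sub>R f k)" for t :: "nat \<Rightarrow> int"
  define \<psi> where "\<psi> t = (\<lambda>y. X t + y) ` M" for t
  have XL: "X t \<in> L" for t unfolding X_def by (intro L_comb f_L) auto
  have sub: "\<psi> ` T \<subseteq> cos" unfolding cos_def \<psi>_def using XL by blast
  have inj: "inj_on \<psi> T"
  proof (rule inj_onI)
    fix t s assume t: "t \<in> T" and s: "s \<in> T" and ts: "\<psi> t = \<psi> s"
    have XM: "X t - X s \<in> M" using ts unfolding \<psi>_def by (rule cos_diff)
    show "t = s"
    proof (rule ccontr)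
      assume ne: "t \<noteq> s"
      have ex: "\<exists>k. k < CARD('n) \<and> t k \<noteq> s k"
      proof (rule ccontr)
        assume "\<not> (\<exists>k. k < CARD('n) \<and> t k \<noteq> s k)"
        then have "t = s" using t s unfolding T_def by (intro PiE_ext[of t "{..<CARD('n)}"]) auto
        then show False using ne by simp
      qed
      define k0 where "k0 = (LEAST k. k < CARD('n) \<and> t k \<noteq> s k)"
      have k0: "k0 < CARD('n)" "t k0 \<noteq> s k0" using LeastI_ex[OF ex] unfolding k0_def by auto
      have below: "t m = s m" if "m < k0" for m
      proof (rule ccontr)
        assume "t m \<noteq> s m"
        then have "k0 \<le> m" unfolding k0_def using that k0(1) by (intro Least_le) simp
        then show False using that by simp
      qed
      have Xd: "X t - X s = (\<Sum>m<CARD('n). of_int (t m - s m) *\<^sub>R f m)"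
        unfolding X_def by (simp only: sum_subtractf[symmetric] scaleR_diff_left of_int_diff)
      have "coef w (X t - X s) k0 = (\<Sum>m<CARD('n). of_int (t m - s m) * coef w (f m) k0)"
        unfolding Xd by (simp add: coef_sum[OF w] coef_scale[OF w])
      also have "\<dots> = (\<Sum>m<CARD('n). if m = k0 then of_int (t k0 - s k0) * e k0 else 0)"
      proof (rule sum.cong)
        fix m assume m: "m \<in> {..<CARD('n)}"
        consider "m < k0" | "m = k0" | "k0 < m" by linarith
        then show "of_int (t m - s m) * coef w (f m) k0 = (if m = k0 then of_int (t k0 - s k0) * e k0 else 0)"
        proof cases
          case 1 then show ?thesis using below[OF 1] by simp
        next
          case 2 then show ?thesis using f_diag[OF k0(1)] by simp
        next
          case 3 then show ?thesis using f_lo[of m k0] m by simp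
        qed
      qed simp
      also have "\<dots> = of_int (t k0 - s k0) * e k0" using k0(1) by (simp add: sum.delta)
      finally have cf: "coef w (X t - X s) k0 = of_int (t k0 - s k0) * e k0" .
      obtain z where z: "coef w (X t - X s) k0 = of_int z" using M_coef[OF XM k0(1)] by blast
      have ne0: "n k0 * e k0 = 1" using n_eq[OF k0(1)] by simp
      have "(of_int (t k0 - s k0) :: real) = of_int (t k0 - s k0) * (of_int (n k0) * e k0)"
        using ne0 by simp
      also have "\<dots> = (of_int (t k0 - s k0) * e k0) * of_int (n k0)" by (simp only: ac_simps)
      also have "\<dots> = of_int (z * n k0)" using cf z by simp
      finally have tz: "t k0 - s k0 = z * n k0" by (simp only: of_int_eq_iff)
      have "t k0 \<in> {0..<n k0}" "s k0 \<in> {0..<n k0}" using t s k0(1) unfolding T_def by (auto simp: PiE_iff)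
      then have lt: "\<bar>t k0 - s k0\<bar> < n k0" by auto
      have "z \<noteq> 0" using tz k0(2) by auto
      then have "n k0 \<le> \<bar>z\<bar> * n k0" using n_pos[OF k0(1)] by (simp add: mult_le_cancel_right1)
      also have "\<dots> = \<bar>t k0 - s k0\<bar>" using tz n_pos[OF k0(1)] by (simp add: abs_mult)
      finally show False using lt by simp
    qed
  qed
  have fT: "finite T" unfolding T_def by (simp add: finite_PiE)
  have cT: "card T = (\<Prod>k<CARD('n). nat (n k))" unfolding T_def by (simp add: card_PiE)
  have "card T = card (\<psi> ` T)" using card_image[OF inj] by simp
  also have "\<dots> \<le> card cos" by (rule card_mono[OF fin_cos sub])
  also have "\<dots> = lattice_index L M" unfolding cos_def lattice_index_def by simp
  finally have le: "(\<Prod>k<CARD('n). nat (n k)) \<le> lattice_index L M" using cT by simp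
  have "(\<Prod>k<CARD('n). n k) = (\<Prod>k<CARD('n). int (nat (n k)))"
  proof (rule prod.cong)
    fix k assume "k \<in> {..<CARD('n)}"
    then have "1 \<le> n k" by (simp add: n_pos)
    then show "n k = int (nat (n k))" by simp
  qed simp
  also have "\<dots> = int (\<Prod>k<CARD('n). nat (n k))" by (simp add: of_nat_prod)
  finally have eq: "(\<Prod>k<CARD('n). n k) = int (\<Prod>k<CARD('n). nat (n k))" .
  have le': "int (\<Prod>k<CARD('n). nat (n k)) \<le> int (lattice_index L M)" using le by (simp only: of_nat_le_iff)
  show ?thesis using eq le' by linarith
qed

definition P where "P j = (\<Prod>m<j. n m)"

lemma P_pos: "j \<le> CARD('n) \<Longrightarrow> 1 \<le> P j"
proof (induction j)
  case 0 then show ?case by (simp add: P_def)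
next
  case (Suc j)
  then have "1 \<le> P j" "1 \<le> n j" using n_pos by auto
  then have "1 * 1 \<le> P j * n j" by (intro mult_mono) auto
  then show ?case by (simp add: P_def)
qed

lemma P_Suc: "P (Suc j) = P j * n j" by (simp add: P_def)

lemma P_mono: "k \<le> CARD('n) \<Longrightarrow> j \<le> k \<Longrightarrow> P j \<le> P k"
proof (induction k)
  case 0 then show ?case by simp
next
  case (Suc k)
  show ?case
  proof (cases "j = Suc k")
    case True then show ?thesis by simp
  next
    case False
    then have jk: "j \<le> k" using Suc.prems by simp
    have "P j \<le> P k" using Suc jk by simp
    also have "P k \<le> P k * n k" using P_pos[of k] n_pos[of k] Suc.prems
      by (simp add: mult_le_cancel_left1)
    finally show ?thesis by (simp add: P_Suc)
  qed
qed

lemma geom: "(\<Sum>k<j. (2::int) ^ k) = 2 ^ j - 1"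
  by (induction j) simp_all

lemma step_ineq:
  assumes v: "v \<in> minvecs L" and \<beta>: "v = (\<Sum>i<CARD('n). of_int (\<beta> i) *\<^sub>R f i)" and j: "j < CARD('n)"
  shows "\<bar>\<beta> j\<bar> \<le> n j * (1 + (\<Sum>k<j. \<bar>\<beta> k\<bar>))"
proof -
  define c where "c = coef w v j"
  have "c = (\<Sum>k<CARD('n). of_int (\<beta> k) * coef w (f k) j)"
    unfolding c_def \<beta> by (simp add: coef_sum[OF w] coef_scale[OF w])
  also have "\<dots> = (\<Sum>k<Suc j. of_int (\<beta> k) * coef w (f k) j)"
    using j by (intro sum.mono_neutral_right) (auto simp: f_lo)
  also have "\<dots> = (\<Sum>k<j. of_int (\<beta> k) * coef w (f k) j) + of_int (\<beta> j) * e j"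
    by (simp add: f_diag[OF j])
  finally have ceq: "c = (\<Sum>k<j. of_int (\<beta> k) * coef w (f k) j) + of_int (\<beta> j) * e j" .
  have c1: "\<bar>c\<bar> \<le> 1" unfolding c_def using wmax[OF v j] .
  have sb: "\<bar>\<Sum>k<j. of_int (\<beta> k) * coef w (f k) j\<bar> \<le> (\<Sum>k<j. \<bar>real_of_int (\<beta> k)\<bar>)"
  proof -
    have "\<bar>\<Sum>k<j. of_int (\<beta> k) * coef w (f k) j\<bar> \<le> (\<Sum>k<j. \<bar>of_int (\<beta> k) * coef w (f k) j\<bar>)"
      by (rule sum_abs)
    also have "\<dots> \<le> (\<Sum>k<j. \<bar>real_of_int (\<beta> k)\<bar>)"
    proof (rule sum_mono)
      fix k assume "k \<in> {..<j}"
      then have "0 \<le> coef w (f k) j \<and> coef w (f k) j < 1" using f_hi j by simp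
      then show "\<bar>of_int (\<beta> k) * coef w (f k) j\<bar> \<le> \<bar>real_of_int (\<beta> k)\<bar>"
        by (simp add: abs_mult mult_left_le)
    qed
    finally show ?thesis .
  qed
  have "\<bar>real_of_int (\<beta> j) * e j\<bar> \<le> 1 + (\<Sum>k<j. \<bar>real_of_int (\<beta> k)\<bar>)"
    using ceq c1 sb by linarith
  then have a: "\<bar>real_of_int (\<beta> j)\<bar> * e j \<le> 1 + (\<Sum>k<j. \<bar>real_of_int (\<beta> k)\<bar>)"
    using e_pos[OF j] by (simp add: abs_mult)
  have ne: "real_of_int (n j) * e j = 1" "1 \<le> n j" using n_eq[OF j] by auto
  have "\<bar>real_of_int (\<beta> j)\<bar> = (\<bar>real_of_int (\<beta> j)\<bar> * e j) * real_of_int (n j)"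
    using ne(1) by (simp add: algebra_simps)
  also have "\<dots> \<le> (1 + (\<Sum>k<j. \<bar>real_of_int (\<beta> k)\<bar>)) * real_of_int (n j)"
    using a ne(2) by (intro mult_right_mono) auto
  finally have "real_of_int \<bar>\<beta> j\<bar> \<le> real_of_int (n j * (1 + (\<Sum>k<j. \<bar>\<beta> k\<bar>)))"
    by (simp add: algebra_simps)
  then show ?thesis by (simp only: of_int_le_iff)
qed

lemma beta_bound:
  assumes v: "v \<in> minvecs L" and \<beta>: "v = (\<Sum>i<CARD('n). of_int (\<beta> i) *\<^sub>R f i)"
  shows "j < CARD('n) \<Longrightarrow> \<bar>\<beta> j\<bar> \<le> 2 ^ j * P (Suc j)"
proof (induction j rule: less_induct)
  case (less j)
  have j: "j < CARD('n)" by fact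
  have Pj: "1 \<le> P j" using P_pos j by simp
  have "(\<Sum>k<j. \<bar>\<beta> k\<bar>) \<le> (\<Sum>k<j. 2 ^ k * P j)"
  proof (rule sum_mono)
    fix k assume k: "k \<in> {..<j}"
    then have "\<bar>\<beta> k\<bar> \<le> 2 ^ k * P (Suc k)" using less j by simp
    also have "\<dots> \<le> 2 ^ k * P j" using k j by (intro mult_left_mono P_mono) auto
    finally show "\<bar>\<beta> k\<bar> \<le> 2 ^ k * P j" .
  qed
  also have "\<dots> = (2 ^ j - 1) * P j" by (simp add: sum_distrib_right[symmetric] geom)
  finally have s: "(\<Sum>k<j. \<bar>\<beta> k\<bar>) \<le> (2 ^ j - 1) * P j" .
  have "\<bar>\<beta> j\<bar> \<le> n j * (1 + (\<Sum>k<j. \<bar>\<beta> k\<bar>))" by (rule step_ineq[OF v \<beta> j])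
  also have "\<dots> \<le> n j * (P j + (2 ^ j - 1) * P j)"
    using s Pj n_pos[OF j] by (intro mult_left_mono) auto
  also have "\<dots> = 2 ^ j * P (Suc j)" by (simp add: P_Suc algebra_simps)
  finally show ?case .
qed

lemma final_bound:
  assumes v: "v \<in> minvecs L" and \<beta>: "v = (\<Sum>i<CARD('n). of_int (\<beta> i) *\<^sub>R f i)" and j: "j < CARD('n)"
  shows "\<bar>\<beta> j\<bar> \<le> 2 ^ j * int (I_dim TYPE('n))"
proof -
  have "\<bar>\<beta> j\<bar> \<le> 2 ^ j * P (Suc j)" by (rule beta_bound[OF v \<beta> j])
  also have "P (Suc j) \<le> P CARD('n)" using j by (intro P_mono) auto
  also have "P CARD('n) \<le> int (lattice_index L M)" using prod_le unfolding P_def .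
  also have "\<dots> \<le> int (I_dim TYPE('n))" using idx_le by simp
  finally show ?thesis by simp
qed

end


lemma exists_w:
  fixes L :: "(real^'n) set" and g :: "nat \<Rightarrow> real^'n"
  assumes g: "isbasis g" and Lg: "L = Zspan g CARD('n)" and sp: "span (minvecs L) = UNIV"
  obtains w where "isbasis w" "\<And>i. i < CARD('n) \<Longrightarrow> w i \<in> minvecs L"
    "\<And>v k. v \<in> minvecs L \<Longrightarrow> k < CARD('n) \<Longrightarrow> \<bar>coef w v k\<bar> \<le> 1"
proof -
  obtain hh :: "'n \<Rightarrow> nat" where hh0: "bij_betw hh UNIV {0..<card (UNIV :: 'n set)}"
    using ex_bij_betw_finite_nat[of "UNIV :: 'n set"] by auto
  have hh: "bij_betw hh UNIV {..<CARD('n)}" using hh0 by (simp add: atLeast0LessThan)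
  define T where "T = PiE {..<CARD('n)} (\<lambda>_. minvecs L)"
  have fT: "finite T" unfolding T_def using finite_minvecs[OF g Lg] by (simp add: finite_PiE)
  obtain u where u: "isbasis u" "\<And>i. i < CARD('n) \<Longrightarrow> u i \<in> minvecs L"
    using span_basis_in[OF sp] by blast
  define u' where "u' = restrict u {..<CARD('n)}"
  have u'T: "u' \<in> T" unfolding T_def u'_def using u(2) by auto
  have "matw hh u' = matw hh u" unfolding matw_def u'_def
  proof (rule Cart_lambda_cong)
    fix i
    have "hh i \<in> {..<CARD('n)}" using bij_betwE[OF hh] by blast
    then show "restrict u {..<CARD('n)} (hh i) = u (hh i)" by simp
  qed
  then have du': "det (matw hh u') \<noteq> 0" using det_matw_nz[OF hh u(1)] by simp
  define F where "F x = \<bar>det (matw hh x)\<bar>" for x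
  have ne: "T \<noteq> {}" using u'T by blast
  define m where "m = Max (F ` T)"
  have "m \<in> F ` T" unfolding m_def using fT ne by (intro Max_in) auto
  then obtain w where wT: "w \<in> T" "F w = m" by blast
  have wmx: "F x \<le> F w" if "x \<in> T" for x
    unfolding wT(2) m_def using fT that by (intro Max_ge) auto
  have "0 < F u'" unfolding F_def using du' by simp
  then have Fpos: "0 < F w" using wmx[OF u'T] by linarith
  then have wb: "isbasis w" using matw_isbasis[OF hh] unfolding F_def by simp
  have wm: "w i \<in> minvecs L" if "i < CARD('n)" for i using wT(1) that unfolding T_def by auto
  have bd: "\<bar>coef w v k\<bar> \<le> 1" if v: "v \<in> minvecs L" and k: "k < CARD('n)" for v k
  proof -
    have "w(k := v) \<in> T" using wT(1) k v unfolding T_def by (auto simp: PiE_iff extensional_def)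
    then have "F (w(k := v)) \<le> F w" by (rule wmx)
    moreover have "F (w(k := v)) = \<bar>coef w v k\<bar> * F w"
      unfolding F_def using det_replace[OF hh wb k, of v] by (simp add: abs_mult)
    ultimately have "\<bar>coef w v k\<bar> * F w \<le> 1 * F w" by simp
    then show ?thesis using Fpos by (simp only: mult_le_cancel_right_pos)
  qed
  show ?thesis using that wb wm bd by blast
qed

theorem theorem17p1:
  fixes L :: "(real^'n) set"
  assumes "is_lattice L" and "perfect L"
  shows "\<exists>f. is_lattice_basis L f \<and>
           (\<forall>v\<in>minvecs L. \<forall>\<beta> :: nat \<Rightarrow> int.
              v = (\<Sum>i<CARD('n). of_int (\<beta> i) *\<^sub>R f i) \<longrightarrow>
              (\<forall>i<CARD('n). \<bar>\<beta> i\<bar> \<le> 2 ^ i * int (I_dim TYPE('n))))"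
proof -
  obtain g where gb: "is_lattice_basis L g" using assms(1) unfolding is_lattice_def by blast
  have g: "isbasis g" and Lg: "L = Zspan g CARD('n)"
    using gb unfolding is_lattice_basis_def isbasis_def by auto
  have sp: "span (minvecs L) = UNIV" by (rule perfect_span[OF assms(2)])
  obtain w where w: "isbasis w" "\<And>i. i < CARD('n) \<Longrightarrow> w i \<in> minvecs L"
    "\<And>v k. v \<in> minvecs L \<Longrightarrow> k < CARD('n) \<Longrightarrow> \<bar>coef w v k\<bar> \<le> 1"
    using exists_w[OF g Lg sp] by blast
  interpret mc L g w
    by unfold_locales (use g Lg w in auto)
  show ?thesis
  proof (intro exI[of _ f] conjI ballI allI impI)
    show "is_lattice_basis L f" by (rule f_lattice_basis)
  next
    fix v \<beta> i
    assume "v \<in> minvecs L" "v = (\<Sum>i<CARD('n). of_int (\<beta> i) *\<^sub>R f i)" "i < CARD('n)"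
    then show "\<bar>\<beta> i\<bar> \<le> 2 ^ i * int (I_dim TYPE('n))" by (rule final_bound)
  qed
qed


end
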